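(* Let $\mathcal{H}$ be a hypothesis space of binary classifiers and let $\mathcal{D}_\mathcal{S}$ (source) and $\mathcal{D}_\mathcal{T}$ (target) be distributions over pairs $(X,A)$ with $A\in\{0,1\}$, satisfying covariate shift: $\mathbb{P}_{\mathcal{D}_\mathcal{S}}(X=x)\neq\mathbb{P}_{\mathcal{D}_\mathcal{T}}(X=x)$ and $\mathbb{P}_{\mathcal{D}_\mathcal{S}}(A=a\mid X=x)=\mathbb{P}_{\mathcal{D}_\mathcal{T}}(A=a\mid X=x)$. Let $h\in\mathcal{H}$, $\hat{A}=h(X)\in\{0,1\}$, and let $\hat{Y}$ be a random variable (predicted label) with values in a finite set. Use one-hot encodings with the $\ell_p$-norm ($p\ge1$) as ground metric (for pairs, the $\ell_p$-norm of concatenated one-hot vectors), and compute $I_W(\hat{Y},A)$ and $I_W(\hat{Y},\hat{A})$ under the target distribution. Let $\varepsilon_\mathcal{S}=\mathbb{P}_{\mathcal{D}_\mathcal{S}}(\hat{A}\neq A)$. Then $$I_W(\hat{Y},A)\le I_W(\hat{Y},\hat{A})+2\sqrt[p]{2}\left(\varepsilon_\mathcal{S}+\tfrac{1}{2}d_{\mathcal{H}\Delta\mathcal{H}}(\tilde{\mathcal{D}}_\mathcal{S},\tilde{\mathcal{D}}_\mathcal{T})+\lambda\right),$$ where $\tilde{\mathcal{D}}_\mathcal{S},\tilde{\mathcal{D}}_\mathcal{T}$ are the marginal feature distributions of $X$, and $\lambda=\lambda_\mathcal{S}+\lambda_\mathcal{T}$ with $\lambda_\mathcal{S}=\varepsilon_\mathcal{S}(h^*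 )$, $\lambda_\mathcal{T}=\varepsilon_\mathcal{T}(h^* )$ for $h^*\in\arg\min_{h'\in\mathcal{H}}\big(\varepsilon_\mathcal{S}(h')+\varepsilon_\mathcal{T}(h')\big)$.
   Context: For random variables $U,V$, $I_W(U,V)=W_1(p(U,V),p(U)p(V))$ is the Wasserstein Dependency Measure, with $W_1$ the 1-Wasserstein distance for the ground metric, $p(U,V)$ the joint law and $p(U)p(V)$ the product of marginals. For $h'\in\mathcal{H}$, $\varepsilon_\mathcal{S}(h')=\mathbb{P}_{\mathcal{D}_\mathcal{S}}(h'(X)\neq A)$ and $\varepsilon_\mathcal{T}(h')=\mathbb{P}_{\mathcal{D}_\mathcal{T}}(h'(X)\neq A)$. The $\mathcal{H}\Delta\mathcal{H}$-divergence between marginal distributions $\tilde{\mathcal{D}}_\mathcal{S},\tilde{\mathcal{D}}_\mathcal{T}$ is $d_{\mathcal{H}\Delta\mathcal{H}}(\tilde{\mathcal{D}}_\mathcal{S},\tilde{\mathcal{D}}_\mathcal{T})=2\sup_{h_1,h_2\in\mathcal{H}}\left|\mathbb{P}_{\tilde{\mathcal{D}}_\mathcal{S}}(h_1(X)\neq h_2(X))-\mathbb{P}_{\tilde{\mathcal{D}}_\mathcal{T}}(h_1(X)\neq h_2(X))\right|$. *)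

theory Defs
  imports "HOL-Probability.Probability"
begin

definition onehot :: "'a \<Rightarrow> 'a \<Rightarrow> real" where
  "onehot a = (\<lambda>i. if i = a then 1 else 0)"

definition lp_norm :: "real \<Rightarrow> ('i::finite \<Rightarrow> real) \<Rightarrow> real" where
  "lp_norm p v = (\<Sum>i\<in>UNIV. \<bar>v i\<bar> powr p) powr (1 / p)"

definition concat_vec :: "('i \<Rightarrow> real) \<Rightarrow> ('j \<Rightarrow> real) \<Rightarrow> ('i + 'j \<Rightarrow> real)" where
  "concat_vec u v = case_sum u v"

definition onehot_pair_dist ::
  "real \<Rightarrow> ('a::finite \<times> 'b::finite) \<Rightarrow> ('a \<times> 'b) \<Rightarrow> real" where
  "onehot_pair_dist p u w =
     lp_norm p (\<lambda>i. concat_vec (onehot (fst u)) (onehot (snd u)) i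
                   - concat_vec (onehot (fst w)) (onehot (snd w)) i)"

definition couplings :: "'a pmf \<Rightarrow> 'a pmf \<Rightarrow> ('a \<times> 'a) pmf set" where
  "couplings P Q = {R. map_pmf fst R = P \<and> map_pmf snd R = Q}"

definition wasserstein1 :: "('a \<Rightarrow> 'a \<Rightarrow> real) \<Rightarrow> 'a pmf \<Rightarrow> 'a pmf \<Rightarrow> real" where
  "wasserstein1 d P Q =
     (INF R\<in>couplings P Q. measure_pmf.expectation R (\<lambda>(u, w). d u w))"

definition wdm :: "('u \<times> 'v \<Rightarrow> 'u \<times> 'v \<Rightarrow> real) \<Rightarrow> ('u \<times> 'v) pmf \<Rightarrow> real" where
  "wdm d J = wasserstein1 d J (pair_pmf (map_pmf fst J) (map_pmf snd J))"

definition err :: "('x \<times> bool) pmf \<Rightarrow> ('x \<Rightarrow> bool) \<Rightarrow> real" where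
  "err D h = measure_pmf.prob D {(x, a). h x \<noteq> a}"

definition condA :: "('x \<times> bool) pmf \<Rightarrow> 'x \<Rightarrow> bool \<Rightarrow> real" where
  "condA D x a = measure_pmf.prob D {(x, a)} / pmf (map_pmf fst D) x"

definition HdH_div :: "('x \<Rightarrow> bool) set \<Rightarrow> 'x pmf \<Rightarrow> 'x pmf \<Rightarrow> real" where
  "HdH_div H P Q = 2 * (SUP hh\<in>H \<times> H.
      \<bar>measure_pmf.prob P {x. fst hh x \<noteq> snd hh x}
       - measure_pmf.prob Q {x. fst hh x \<noteq> snd hh x}\<bar>)"

end

theory Submission
  imports Defs
begin

lemma sum_onehot_diff:
  fixes y y' :: "'y::finite"
  assumes p: "p > 0"
  shows "(\<Sum>i\<in>UNIV. \<bar>onehot y i - onehot y' i\<bar> powr p) = (if y = y' then 0 else 2)"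
proof (cases "y = y'")
  case True then show ?thesis by (simp add: onehot_def)
next
  case False
  have "\<And>i. \<bar>onehot y i - onehot y' i\<bar> powr p = (if i = y then 1 else 0) + (if i = y' then 1 else 0)"
    using False p by (auto simp: onehot_def)
  then have "(\<Sum>i\<in>UNIV. \<bar>onehot y i - onehot y' i\<bar> powr p) = (\<Sum>i\<in>UNIV. (if i = y then 1 else 0) + (if i = y' then (1::real) else 0))"
    by simp
  also have "\<dots> = 2" by (simp add: sum.distrib)
  finally show ?thesis using False by simp
qed

lemma dist_formula:
  fixes y y' :: "'y::finite" and a a' :: bool
  assumes p: "p > 0"
  shows "onehot_pair_dist p (y, a) (y', a') =
     ((if y = y' then 0 else 2) + (if a = a' then 0 else 2)) powr (1 / p)"
proof -
  have "(\<Sum>i\<in>(UNIV::('y + bool) set). \<bar>concat_vec (onehot y) (onehot a) i - concat_vec (onehot y') (onehot a') i\<bar> powr p)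
     = (\<Sum>i\<in>UNIV. \<bar>onehot y i - onehot y' i\<bar> powr p) + (\<Sum>i\<in>UNIV. \<bar>onehot a i - onehot a' i\<bar> powr p)"
    by (subst UNIV_Plus_UNIV[symmetric], subst sum.Plus) (auto simp: concat_vec_def comp_def)
  moreover note sum_onehot_diff[OF p, of y y'] sum_onehot_diff[OF p, of a a']
  ultimately show ?thesis
    unfolding onehot_pair_dist_def lp_norm_def by (simp only: fst_conv snd_conv)
qed

lemma glue:
  fixes pq :: "('a \<times> 'b) pmf" and qr :: "('b \<times> 'c) pmf"
  assumes "map_pmf snd pq = map_pmf fst qr"
  shows "\<exists>pqr. map_pmf (\<lambda>(a, b, c). (a, b)) pqr = pq \<and> map_pmf (\<lambda>(a, b, c). (b, c)) pqr = qr"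
proof -
  define K where "K y = cond_pmf qr {yz. fst yz = y}" for y
  define pqr where "pqr = bind_pmf pq (\<lambda>xy. map_pmf (\<lambda>yz. (fst xy, yz)) (K (snd xy)))"
  have ne: "set_pmf qr \<inter> {yz. fst yz = snd xy} \<noteq> {}" if "xy \<in> set_pmf pq" for xy
  proof -
    have "snd xy \<in> set_pmf (map_pmf snd pq)" using that by force
    then have "snd xy \<in> set_pmf (map_pmf fst qr)" using assms by simp
    then show ?thesis by force
  qed
  have "map_pmf (\<lambda>(a, b, c). (a, b)) pqr = bind_pmf pq return_pmf"
    unfolding pqr_def map_bind_pmf
  proof (rule bind_pmf_cong[OF refl])
    fix xy assume xy: "xy \<in> set_pmf pq"
    have "set_pmf (K (snd xy)) = set_pmf qr \<inter> {yz. fst yz = snd xy}" unfolding K_def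
      using ne[OF xy] by simp
    then have "map_pmf (\<lambda>(a, b, c). (a, b)) (map_pmf (\<lambda>yz. (fst xy, yz)) (K (snd xy))) = map_pmf (\<lambda>_. xy) (K (snd xy))"
      unfolding map_pmf_comp by (intro map_pmf_cong) auto
    then show "map_pmf (\<lambda>(a, b, c). (a, b)) (map_pmf (\<lambda>yz. (fst xy, yz)) (K (snd xy))) = return_pmf xy"
      by (simp add: map_pmf_const)
  qed
  then have 1: "map_pmf (\<lambda>(a, b, c). (a, b)) pqr = pq" by (simp add: bind_return_pmf')
  have "map_pmf (\<lambda>(a, b, c). (b, c)) pqr = bind_pmf pq (\<lambda>xy. K (snd xy))"
    unfolding pqr_def map_bind_pmf
    by (rule bind_pmf_cong[OF refl]) (auto simp: map_pmf_comp split_beta)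
  also have "\<dots> = bind_pmf (map_pmf snd pq) K" by (simp add: bind_map_pmf)
  also have "\<dots> = bind_pmf (map_pmf fst qr) (\<lambda>y. cond_pmf qr {yz. fst yz = y})"
    using assms unfolding K_def by simp
  also have "\<dots> = qr"
    by (rule bind_cond_pmf_cancel) (force, force, auto simp: vimage_def eq_commute)
  finally show ?thesis using 1 by blast
qed

lemma dist_nonneg: "onehot_pair_dist p u w \<ge> 0"
  unfolding onehot_pair_dist_def lp_norm_def by simp

lemma dist_tri:
  fixes u v w :: "'y::finite \<times> bool"
  assumes p: "p \<ge> 1"
  shows "onehot_pair_dist p u w \<le> onehot_pair_dist p u v + onehot_pair_dist p v w"
proof -
  define c where "c = (2::real) powr (1 / p)"
  have p0: "p > 0" using p by simp
  have c1: "c \<ge> 1" unfolding c_def using p by (simp add: ge_one_powr_ge_zero)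
  have "c \<le> 2 powr 1" unfolding c_def using p by (intro powr_mono) auto
  then have c2: "c \<le> 2" by simp
  have c4: "(4::real) powr (1 / p) = c * c" unfolding c_def
    by (simp add: powr_mult[symmetric])
  have D: "onehot_pair_dist p (y, a) (y', a') =
     (if y = y' then (if a = a' then 0 else c) else (if a = a' then c else c * c))" for y y' :: 'y and a a' :: bool
    unfolding dist_formula[OF p0] using c4 by (simp add: c_def)
  obtain y1 a1 y2 a2 y3 a3 where [simp]: "u = (y1, a1)" "v = (y2, a2)" "w = (y3, a3)"
    by (cases u, cases v, cases w) auto
  have cc: "c * c \<le> 2 * c" "c \<le> c * c" using c1 c2 by (simp_all add: mult_right_mono)
  show ?thesis
    unfolding \<open>u = _\<close> \<open>v = _\<close> \<open>w = _\<close> D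
    using c1 cc by (simp split: if_splits)
qed

lemma dist_tri3:
  fixes u v w z :: "'y::finite \<times> bool"
  assumes p: "p \<ge> 1"
  shows "onehot_pair_dist p u z \<le> onehot_pair_dist p u v + onehot_pair_dist p v w + onehot_pair_dist p w z"
  using dist_tri[OF p, of u z v] dist_tri[OF p, of v z w] by linarith

lemma da_bound:
  fixes S :: "('x \<times> bool) pmf" and T' :: "('x \<times> bool) pmf"
  assumes "h \<in> H" "hstar \<in> H"
  shows "err T' h \<le> err S h + 1 / 2 * HdH_div H (map_pmf fst S) (map_pmf fst T') + (err S hstar + err T' hstar)"
proof -
  let ?D = "{x. h x \<noteq> hstar x}"
  have t1: "err T' h \<le> measure_pmf.prob T' (fst -` ?D) + err T' hstar"
    unfolding err_def
    by (rule order_trans[OF measure_pmf.finite_measure_mono measure_subadditive]) (auto simp: measure_pmf.emeasure_eq_measure)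
  have s1: "measure_pmf.prob S (fst -` ?D) \<le> err S h + err S hstar"
    unfolding err_def
    by (rule order_trans[OF measure_pmf.finite_measure_mono measure_subadditive]) (auto simp: measure_pmf.emeasure_eq_measure)
  let ?f = "\<lambda>hh. \<bar>measure_pmf.prob (map_pmf fst S) {x. fst hh x \<noteq> snd hh x}
       - measure_pmf.prob (map_pmf fst T') {x. fst hh x \<noteq> snd hh x}\<bar>"
  have bdd: "bdd_above (?f ` (H \<times> H))"
  proof (rule bdd_aboveI2)
    fix hh :: "('x \<Rightarrow> bool) \<times> ('x \<Rightarrow> bool)"
    show "?f hh \<le> 1"
      using measure_pmf.prob_le_1 measure_nonneg
      by (smt (verit, best) measure_pmf.prob_le_1)
  qed
  have "?f (h, hstar) \<le> (SUP hh\<in>H \<times> H. ?f hh)"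
    by (rule cSUP_upper[OF _ bdd]) (use assms in auto)
  then have "measure_pmf.prob T' (fst -` ?D) \<le> measure_pmf.prob S (fst -` ?D) + 1 / 2 * HdH_div H (map_pmf fst S) (map_pmf fst T')"
    unfolding HdH_div_def by simp
  then show ?thesis using t1 s1 by linarith
qed

lemma exp_nonneg_d: "measure_pmf.expectation R (\<lambda>(u, w). onehot_pair_dist p u w) \<ge> 0"
  by (rule Bochner_Integration.integral_nonneg) (auto simp: dist_nonneg split_beta)

lemma w_le_cost:
  assumes "R \<in> couplings P Q"
  shows "wasserstein1 (onehot_pair_dist p) P Q \<le> measure_pmf.expectation R (\<lambda>(u, w). onehot_pair_dist p u w)"
  unfolding wasserstein1_def
  by (rule cINF_lower[OF _ assms]) (auto intro!: bdd_belowI2[where m=0] exp_nonneg_d)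

lemma w_bound:
  fixes T :: "('x \<times> bool \<times> 'y::finite) pmf" and p :: real
  assumes p: "p \<ge> 1"
  shows "wdm (onehot_pair_dist p) (map_pmf (\<lambda>(x,a,y). (y,a)) T)
     \<le> wdm (onehot_pair_dist p) (map_pmf (\<lambda>(x,a,y). (y,h x)) T)
        + 2 * 2 powr (1/p) * err (map_pmf (\<lambda>(x,a,y). (x,a)) T) h"
proof -
  define d :: "'y \<times> bool \<Rightarrow> 'y \<times> bool \<Rightarrow> real" where "d = onehot_pair_dist p"
  define c where "c = (2::real) powr (1 / p)"
  have p0: "p > 0" using p by simp
  define T' where "T' = map_pmf (\<lambda>(x,a,y). (x,a)) T"
  define eT where "eT = err T' h"
  define J1 where "J1 = map_pmf (\<lambda>(x,a,y). (y,a)) T"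
  define J2 where "J2 = map_pmf (\<lambda>(x,a,y). (y,h x)) T"
  define P1 where "P1 = pair_pmf (map_pmf fst J1) (map_pmf snd J1)"
  define P2 where "P2 = pair_pmf (map_pmf fst J2) (map_pmf snd J2)"
  define Ty where "Ty = map_pmf (\<lambda>(x,a,y). y) T"
  define cost where "cost R = measure_pmf.expectation R (\<lambda>(u, w). d u w)" for R
  define g where "g = (\<lambda>(x::'x, a). if h x = a then 0 else c)"
  have Eg: "measure_pmf.expectation T' g = c * eT"
  proof -
    have "g = (\<lambda>z. c * indicator {(x, a). h x \<noteq> a} z)"
      by (auto simp: g_def fun_eq_iff split: split_indicator)
    then show ?thesis unfolding eT_def err_def
      by (simp add: measure_pmf.emeasure_eq_measure)
  qed
  have dval: "d (y, a) (y, a') = (if a = a' then 0 else c)" for y a a'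
    unfolding d_def dist_formula[OF p0] c_def by simp
  have main: "wdm d J1 \<le> cost R2 + 2 * c * eT" if R2: "R2 \<in> couplings J2 P2" for R2
  proof -
    define C1 where "C1 = map_pmf (\<lambda>(x,a,y). ((y,a),(y,h x))) T"
    have "map_pmf snd C1 = map_pmf fst R2"
      using R2 unfolding C1_def couplings_def J2_def by (auto simp: map_pmf_comp split_beta case_prod_unfold intro!: map_pmf_cong)
    from glue[OF this] obtain D1 where
      D1a: "map_pmf (\<lambda>(a, b, c). (a, b)) D1 = C1" and D1b: "map_pmf (\<lambda>(a, b, c). (b, c)) D1 = R2"
      by blast
    define C3 where "C3 = map_pmf (\<lambda>(y,(x,a)). ((y,h x),(y,a))) (pair_pmf Ty T')"
    define D1' where "D1' = map_pmf (\<lambda>(a,b,c). ((a,b),c)) D1"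
    have Ty1: "map_pmf fst J1 = Ty" "map_pmf fst J2 = Ty"
      unfolding Ty_def J1_def J2_def by (simp_all add: map_pmf_comp split_beta case_prod_unfold)
    have m1: "map_pmf snd J1 = map_pmf snd T'" "map_pmf snd J2 = map_pmf (\<lambda>(x,a). h x) T'"
      unfolding T'_def J1_def J2_def by (simp_all add: map_pmf_comp split_beta case_prod_unfold)
    have "map_pmf fst C3 = map_pmf (\<lambda>(y, xa). (id y, (\<lambda>(x,a). h x) xa)) (pair_pmf Ty T')"
      unfolding C3_def by (simp add: map_pmf_comp split_beta case_prod_unfold)
    also have "\<dots> = P2" unfolding map_pair P2_def Ty1 m1 by simp
    finally have C3a: "map_pmf fst C3 = P2" .
    have "map_pmf snd C3 = map_pmf (\<lambda>(y, xa). (id y, snd xa)) (pair_pmf Ty T')"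
      unfolding C3_def by (simp add: map_pmf_comp split_beta case_prod_unfold)
    also have "\<dots> = P1" unfolding map_pair P1_def Ty1 m1 by simp
    finally have C3b: "map_pmf snd C3 = P1" .
    have "map_pmf snd D1' = map_pmf snd R2"
      unfolding D1'_def D1b[symmetric] by (simp add: map_pmf_comp split_beta case_prod_unfold)
    also have "\<dots> = map_pmf fst C3" using R2 C3a unfolding couplings_def by simp
    finally obtain E where
      Ea: "map_pmf (\<lambda>(a, b, c). (a, b)) E = D1'" and Eb: "map_pmf (\<lambda>(a, b, c). (b, c)) E = C3"
      using glue by blast
    define R1 where "R1 = map_pmf (\<lambda>((a,b),c,e). (a,e)) E"
    have "map_pmf fst R1 = map_pmf (\<lambda>((a,b),c). a) D1'"
      unfolding R1_def Ea[symmetric] by (simp add: map_pmf_comp split_beta case_prod_unfold)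
    also have "\<dots> = map_pmf fst (map_pmf (\<lambda>(a, b, c). (a, b)) D1)"
      unfolding D1'_def by (simp add: map_pmf_comp split_beta case_prod_unfold)
    also have "\<dots> = J1" unfolding D1a C1_def J1_def by (simp add: map_pmf_comp split_beta case_prod_unfold)
    finally have R1a: "map_pmf fst R1 = J1" .
    have "map_pmf snd R1 = map_pmf snd C3"
      unfolding R1_def Eb[symmetric] by (simp add: map_pmf_comp split_beta case_prod_unfold)
    then have R1b: "map_pmf snd R1 = P1" using C3b by simp
    have "wdm d J1 \<le> cost R1"
      unfolding wdm_def cost_def d_def P1_def[symmetric]
      by (rule w_le_cost) (simp add: couplings_def R1a R1b)
    also have "cost R1 = measure_pmf.expectation E (\<lambda>((a,b),c,e). d a e)"
      unfolding cost_def R1_def by (simp add: split_beta case_prod_unfold)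
    also have "\<dots> \<le> measure_pmf.expectation E (\<lambda>((a,b),c,e). d a b + d b c + d c e)"
      by (rule integral_mono) (auto intro!: integrable_measure_pmf_finite simp: d_def dist_tri3[OF p] split_beta case_prod_unfold)
    also have "\<dots> = measure_pmf.expectation E (\<lambda>((a,b),c,e). d a b) + measure_pmf.expectation E (\<lambda>((a,b),c,e). d b c)
        + measure_pmf.expectation E (\<lambda>((a,b),c,e). d c e)"
      by (simp add: split_beta case_prod_unfold integrable_measure_pmf_finite)
    also have "measure_pmf.expectation E (\<lambda>((a,b),c,e). d a b) = c * eT"
    proof -
      have "measure_pmf.expectation E (\<lambda>((a,b),c,e). d a b) =
          measure_pmf.expectation (map_pmf (\<lambda>(a, b, c). (a, b)) E) (\<lambda>((a,b),c). d a b)"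
        by (simp add: split_beta case_prod_unfold)
      also have "\<dots> = measure_pmf.expectation (map_pmf (\<lambda>(a, b, c). (a, b)) D1) (\<lambda>(a,b). d a b)"
        unfolding Ea D1'_def by (simp add: split_beta case_prod_unfold)
      also have "\<dots> = measure_pmf.expectation C1 (\<lambda>(a,b). d a b)"
        unfolding D1a ..
      also have "\<dots> = measure_pmf.expectation T' g"
        unfolding C1_def T'_def g_def by (simp add: split_beta case_prod_unfold dval eq_commute)
      finally show ?thesis using Eg by simp
    qed
    also have "measure_pmf.expectation E (\<lambda>((a,b),c,e). d b c) = cost R2"
    proof -
      have "measure_pmf.expectation E (\<lambda>((a,b),c,e). d b c) =
          measure_pmf.expectation (map_pmf (\<lambda>(a, b, c). (a, b)) E) (\<lambda>((a,b),c). d b c)"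
        by (simp add: split_beta case_prod_unfold)
      also have "\<dots> = measure_pmf.expectation (map_pmf (\<lambda>(a, b, c). (b, c)) D1) (\<lambda>(b,c). d b c)"
        unfolding Ea D1'_def by (simp add: split_beta case_prod_unfold)
      also have "\<dots> = cost R2"
        unfolding D1b cost_def ..
      finally show ?thesis .
    qed
    also have "measure_pmf.expectation E (\<lambda>((a,b),c,e). d c e) = c * eT"
    proof -
      have "measure_pmf.expectation E (\<lambda>((a,b),c,e). d c e) = measure_pmf.expectation C3 (\<lambda>(a,b). d a b)"
        unfolding Eb[symmetric] by (simp add: split_beta case_prod_unfold)
      also have "\<dots> = measure_pmf.expectation (pair_pmf Ty T') (\<lambda>z. g (snd z))"
        unfolding C3_def g_def by (simp add: split_beta case_prod_unfold dval eq_commute)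
      also have "\<dots> = measure_pmf.expectation (map_pmf snd (pair_pmf Ty T')) g"
        by simp
      finally show ?thesis using Eg by (simp add: map_snd_pair_pmf)
    qed
    finally show ?thesis by simp
  qed
  have ne: "couplings J2 P2 \<noteq> {}"
    using map_fst_pair_pmf map_snd_pair_pmf unfolding couplings_def by blast
  have "wdm d J1 - 2 * c * eT \<le> wdm d J2"
    unfolding wdm_def wasserstein1_def P2_def[symmetric]
    using main ne unfolding cost_def wdm_def wasserstein1_def
    by (intro cINF_greatest) (auto simp: algebra_simps)
  then show ?thesis unfolding J1_def J2_def d_def eT_def T'_def c_def by simp
qed

theorem theorem4:
  fixes H :: "('x \<Rightarrow> bool) set"
    and S :: "('x \<times> bool) pmf"
    and T :: "('x \<times> bool \<times> 'y::finite) pmf"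
    and h hstar :: "'x \<Rightarrow> bool"
    and p :: real
  assumes p: "p \<ge> 1"
    and shift: "\<exists>x. pmf (map_pmf fst S) x \<noteq> pmf (map_pmf fst T) x"
    and cond: "\<forall>x a. pmf (map_pmf fst S) x > 0 \<and> pmf (map_pmf fst T) x > 0 \<longrightarrow>
                 condA S x a = condA (map_pmf (\<lambda>(x, a, y). (x, a)) T) x a"
    and hH: "h \<in> H"
    and hstarH: "hstar \<in> H"
    and hstar_min: "\<forall>h'\<in>H. err S hstar + err (map_pmf (\<lambda>(x, a, y). (x, a)) T) hstar
                              \<le> err S h' + err (map_pmf (\<lambda>(x, a, y). (x, a)) T) h'"
  shows "wdm (onehot_pair_dist p) (map_pmf (\<lambda>(x, a, y). (y, a)) T)
         \<le> wdm (onehot_pair_dist p) (map_pmf (\<lambda>(x, a, y). (y, h x)) T)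
           + 2 * (2 powr (1 / p)) * (err S h + 1 / 2 * HdH_div H (map_pmf fst S) (map_pmf fst T)
               + (err S hstar + err (map_pmf (\<lambda>(x, a, y). (x, a)) T) hstar))"
proof -
  have w: "wdm (onehot_pair_dist p) (map_pmf (\<lambda>(x, a, y). (y, a)) T)
     \<le> wdm (onehot_pair_dist p) (map_pmf (\<lambda>(x, a, y). (y, h x)) T)
        + 2 * 2 powr (1/p) * err (map_pmf (\<lambda>(x, a, y). (x, a)) T) h"
    by (rule w_bound[OF p])
  have e: "err (map_pmf (\<lambda>(x, a, y). (x, a)) T) h \<le> err S h + 1 / 2 * HdH_div H (map_pmf fst S) (map_pmf fst (map_pmf (\<lambda>(x, a, y). (x, a)) T))
      + (err S hstar + err (map_pmf (\<lambda>(x, a, y). (x, a)) T) hstar)"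
    by (rule da_bound[OF hH hstarH])
  have mf: "map_pmf fst (map_pmf (\<lambda>(x, a, y). (x, a)) T) = map_pmf fst T"
    by (simp add: map_pmf_comp split_beta)
  have "0 \<le> 2 * (2::real) powr (1/p)" by simp
  from mult_left_mono[OF e this] have m: "2 * 2 powr (1/p) * err (map_pmf (\<lambda>(x, a, y). (x, a)) T) h \<le>
     2 * 2 powr (1/p) * (err S h + 1 / 2 * HdH_div H (map_pmf fst S) (map_pmf fst T)
      + (err S hstar + err (map_pmf (\<lambda>(x, a, y). (x, a)) T) hstar))"
    unfolding mf .
  show ?thesis using w m by linarith
qed

end
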